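(* Let $\Gamma$ be a finite index subgroup of $\mathrm{SL}_2(\mathbb{Z})$ and let $f$ be a holomorphic modular form of weight $2$ for $\Gamma$. Define \[ h(\tau)=\int_i^{\tau} f(z)\,dz,\qquad \tau\in\mathfrak{H}. \] Then $h$ is $\rho$-equivariant for $\Gamma$ for some triangular representation $\rho$ of $\Gamma$.
   Context: $\mathfrak{H}$ denotes the complex upper half-plane. A holomorphic modular form of weight $2$ for $\Gamma$ is a holomorphic function $f$ on $\mathfrak{H}$ with $f(\gamma\tau)=(c\tau+d)^2f(\tau)$ for all $\gamma=\begin{pmatrix}a&b\\c&d\end{pmatrix}\in\Gamma$, holomorphic at the cusps. For a matrix $\begin{pmatrix}a&b\\c&d\end{pmatrix}$ and $z\in\mathbb{C}$, write $\begin{pmatrix}a&b\\c&d\end{pmatrix}\cdot z=\frac{az+b}{cz+d}$. Given a representation $\rho:\Gamma\to\mathrm{GL}_2(\mathbb{C})$, a meromorphic function $h$ on $\mathfrak{H}$ is called $\rho$-equivariant for $\Gamma$ if $h(\gamma\tau)=\rho(\gamma)\cdot h(\tau)$ for all $\gamma\in\Gamma$, $\tau\in\mathfrak{H}$ (linear fractional action on both sides). The representation $\rho$ is triangular if every $\rho(\gamma)$ is upper triangular. *)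

theory Defs
  imports "HOL-Complex_Analysis.Complex_Analysis" "HOL-Algebra.Coset"
begin

text \<open>2x2 matrices (a,b,c,d) standing for the matrix with rows (a b) and (c d).\<close>
type_synonym 'a mat2 = "'a \<times> 'a \<times> 'a \<times> 'a"

fun mat2_mult :: "'a::comm_ring_1 mat2 \<Rightarrow> 'a mat2 \<Rightarrow> 'a mat2" where
  "mat2_mult (a, b, c, d) (a', b', c', d') =
     (a * a' + b * c', a * b' + b * d', c * a' + d * c', c * b' + d * d')"

fun mat2_det :: "'a::comm_ring_1 mat2 \<Rightarrow> 'a" where
  "mat2_det (a, b, c, d) = a * d - b * c"

definition SL2Z :: "int mat2 monoid" where
  "SL2Z = \<lparr>carrier = {A. mat2_det A = 1}, mult = mat2_mult, one = (1, 0, 0, 1)\<rparr>"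

definition GL2C :: "complex mat2 monoid" where
  "GL2C = \<lparr>carrier = {A. mat2_det A \<noteq> 0}, mult = mat2_mult, one = (1, 0, 0, 1)\<rparr>"

fun moebius :: "complex mat2 \<Rightarrow> complex \<Rightarrow> complex" where
  "moebius (a, b, c, d) z = (a * z + b) / (c * z + d)"

fun of_int_mat2 :: "int mat2 \<Rightarrow> complex mat2" where
  "of_int_mat2 (a, b, c, d) = (of_int a, of_int b, of_int c, of_int d)"

fun automorphy_factor :: "int mat2 \<Rightarrow> complex \<Rightarrow> complex" where
  "automorphy_factor (a, b, c, d) z = of_int c * z + of_int d"

definition upper_half_plane :: "complex set" where
  "upper_half_plane = {z. Im z > 0}"

text \<open>Holomorphy at the cusps: for every \<alpha> in SL_2(Z) the slashed function
  f|\<alpha> (\<tau>) = (c\<tau>+d)^(-2) f(\<alpha>\<tau>) stays bounded as Im \<tau> \<rightarrow> \<infinity>.\<close>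
definition modular_form_wt2 :: "int mat2 set \<Rightarrow> (complex \<Rightarrow> complex) \<Rightarrow> bool" where
  "modular_form_wt2 \<Gamma> f \<longleftrightarrow>
     f holomorphic_on upper_half_plane \<and>
     (\<forall>\<gamma>\<in>\<Gamma>. \<forall>\<tau>\<in>upper_half_plane.
        f (moebius (of_int_mat2 \<gamma>) \<tau>) = (automorphy_factor \<gamma> \<tau>)\<^sup>2 * f \<tau>) \<and>
     (\<forall>\<alpha>\<in>carrier SL2Z. \<exists>y0 M. \<forall>\<tau>. Im \<tau> \<ge> y0 \<longrightarrow>
        norm (f (moebius (of_int_mat2 \<alpha>) \<tau>) / (automorphy_factor \<alpha> \<tau>)\<^sup>2) \<le> M)"

definition equivariant :: "int mat2 set \<Rightarrow> (int mat2 \<Rightarrow> complex mat2) \<Rightarrow> (complex \<Rightarrow> complex) \<Rightarrow> bool" where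
  "equivariant \<Gamma> \<rho> h \<longleftrightarrow>
     (\<forall>\<gamma>\<in>\<Gamma>. \<forall>\<tau>\<in>upper_half_plane. h (moebius (of_int_mat2 \<gamma>) \<tau>) = moebius (\<rho> \<gamma>) (h \<tau>))"

definition triangular_rep :: "int mat2 set \<Rightarrow> (int mat2 \<Rightarrow> complex mat2) \<Rightarrow> bool" where
  "triangular_rep \<Gamma> \<rho> \<longleftrightarrow> (\<forall>\<gamma>\<in>\<Gamma>. \<exists>a b d. \<rho> \<gamma> = (a, b, 0, d))"

end

theory Submission
  imports Defs
begin

lemma af_nz:
  assumes "a * d - b * c = (1::int)" "Im z > 0"
  shows "of_int c * z + of_int d \<noteq> 0"
proof (cases "c = 0")
  case True
  then have "d \<noteq> 0" using assms(1) by auto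
  then show ?thesis using True by simp
next
  case False
  have "Im (of_int c * z + of_int d) = of_int c * Im z" by simp
  also have "\<dots> \<noteq> 0" using False assms(2) by simp
  finally show ?thesis by force
qed

lemma moeb_Im:
  assumes "a * d - b * c = (1::int)" "Im z > 0"
  shows "Im (moebius (of_int a, of_int b, of_int c, of_int d) z) > 0"
proof -
  let ?w = "of_int c * z + of_int d"
  have nz: "?w \<noteq> 0" by (rule af_nz[OF assms])
  have num: "Im (of_int a * z + of_int b) * Re ?w - Re (of_int a * z + of_int b) * Im ?w
      = of_int (a*d - b*c) * Im z"
    by (simp add: algebra_simps)
  have "Im (moebius (of_int a, of_int b, of_int c, of_int d) z)
     = (of_int (a*d - b*c) * Im z) / (cmod ?w)^2"
    unfolding moebius.simps Im_divide' num by simp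
  then show ?thesis using assms nz by simp
qed

lemma moeb_deriv:
  assumes "a * d - b * c = (1::int)" "Im z > 0"
  shows "(moebius (of_int a, of_int b, of_int c, of_int d) has_field_derivative
           1 / (of_int c * z + of_int d)^2) (at z)"
proof -
  have nz: "of_int c * z + of_int d \<noteq> 0" by (rule af_nz[OF assms])
  have e: "complex_of_int a * complex_of_int d - of_int b * of_int c = 1"
    using assms(1) by (metis of_int_1 of_int_diff of_int_mult)
  have "((\<lambda>z. (of_int a * z + of_int b) / (of_int c * z + of_int d)) has_field_derivative
    (of_int a * (of_int c * z + of_int d) - (of_int a * z + of_int b) * of_int c) / (of_int c * z + of_int d)^2) (at z)"
    using nz by (auto intro!: derivative_eq_intros simp: power2_eq_square)
  moreover have "(of_int a * (of_int c * z + of_int d) - (of_int a * z + of_int b) * of_int c)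
     = (1::complex)" using e by (simp add: algebra_simps)
  moreover have "moebius (of_int a, of_int b, of_int c, of_int d) = (\<lambda>z. (of_int a * z + of_int b) / (of_int c * z + of_int d))"
    by (rule ext) simp
  ultimately show ?thesis by simp
qed

lemma moeb_comp:
  assumes "a' * d' - b' * c' = (1::int)" "a * d - b * c = (1::int)" "Im z > 0"
  shows "moebius (of_int_mat2 (mat2_mult (a,b,c,d) (a',b',c',d'))) z
       = moebius (of_int_mat2 (a,b,c,d)) (moebius (of_int_mat2 (a',b',c',d')) z)"
proof -
  have nz1: "of_int c' * z + of_int d' \<noteq> 0" by (rule af_nz[OF assms(1,3)])
  have "Im (moebius (of_int a', of_int b', of_int c', of_int d') z) > 0" by (rule moeb_Im[OF assms(1,3)])
  from af_nz[OF assms(2) this] 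
  have nz2: "of_int c * ((of_int a' * z + of_int b') / (of_int c' * z + of_int d')) + of_int d \<noteq> 0" by simp
  have nz2': "of_int c * (of_int a' * z + of_int b') + of_int d * (of_int c' * z + of_int d') \<noteq> 0"
    using nz2 nz1 by (simp add: field_simps)
  define u where "u = of_int a' * z + (of_int b' :: complex)"
  define w where "w = of_int c' * z + (of_int d' :: complex)"
  have nzw: "w \<noteq> 0" using nz1 w_def by simp
  have lhs: "moebius (of_int_mat2 (mat2_mult (a,b,c,d) (a',b',c',d'))) z
     = (of_int a * u + of_int b * w) / (of_int c * u + of_int d * w)"
    unfolding u_def w_def by simp (simp add: algebra_simps)
  have "(of_int a * (u / w) + of_int b) / (of_int c * (u/w) + of_int d)
      = ((of_int a * (u / w) + of_int b) * w) / ((of_int c * (u/w) + of_int d) * w)"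
    using nzw by simp
  also have "\<dots> = (of_int a * u + of_int b * w) / (of_int c * u + of_int d * w)"
    using nzw by (simp add: algebra_simps)
  finally show ?thesis using lhs unfolding u_def w_def by simp
qed


lemma H_convex: "convex upper_half_plane"
  unfolding upper_half_plane_def by (rule convex_halfspace_Im_gt)

lemma H_open: "open upper_half_plane"
  unfolding upper_half_plane_def by (rule open_halfspace_Im_gt)

lemma h_deriv:
  assumes hol: "f holomorphic_on upper_half_plane" and x: "x \<in> upper_half_plane"
  shows "((\<lambda>x. contour_integral (linepath \<i> x) f) has_field_derivative f x) (at x)"
proof -
  have iH: "\<i> \<in> upper_half_plane" by (simp add: upper_half_plane_def)
  have "((\<lambda>x. contour_integral (linepath \<i> x) f) has_field_derivative f x) (at x within upper_half_plane)"
  proof (rule triangle_contour_integrals_convex_primitive[OF _ iH H_convex x])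
    show "continuous_on upper_half_plane f" using hol by (rule holomorphic_on_imp_continuous_on)
    fix b c assume b: "b \<in> upper_half_plane" and c: "c \<in> upper_half_plane"
    have "convex hull {\<i>, b, c} \<subseteq> upper_half_plane"
      by (rule hull_minimal) (use iH b c H_convex in auto)
    then have "f holomorphic_on convex hull {\<i>, b, c}" by (rule holomorphic_on_subset[OF hol])
    from Cauchy_theorem_triangle[OF this]
    show "contour_integral (linepath \<i> b) f + contour_integral (linepath b c) f +
          contour_integral (linepath c \<i>) f = 0"
      by (rule has_chain_integral_chain_integral3)
  qed
  then show ?thesis by (simp only: at_within_open[OF x H_open])
qed

lemma key:
  assumes hol: "f holomorphic_on upper_half_plane"
    and det: "a * d - b * c = (1::int)"
    and tr: "\<forall>\<tau>\<in>upper_half_plane. f (moebius (of_int_mat2 (a,b,c,d)) \<tau>) = (automorphy_factor (a,b,c,d) \<tau>)\<^sup>2 * f \<tau>"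
    and t: "\<tau> \<in> upper_half_plane"
  shows "contour_integral (linepath \<i> (moebius (of_int_mat2 (a,b,c,d)) \<tau>)) f
     = contour_integral (linepath \<i> \<tau>) f + contour_integral (linepath \<i> (moebius (of_int_mat2 (a,b,c,d)) \<i>)) f"
proof -
  define h where "h = (\<lambda>x. contour_integral (linepath \<i> x) f)"
  define M where "M = moebius (of_int_mat2 (a,b,c,d))"
  define g where "g = (\<lambda>x. h (M x) - h x)"
  have "\<exists>k. \<forall>x\<in>upper_half_plane. g x = k"
  proof (rule has_field_derivative_zero_constant[OF H_convex])
    fix x assume x: "x \<in> upper_half_plane"
    then have ix: "Im x > 0" by (simp add: upper_half_plane_def)
    have nz: "of_int c * x + of_int d \<noteq> 0" by (rule af_nz[OF det ix])
    have Mx: "M x \<in> upper_half_plane"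
      using moeb_Im[OF det ix] by (simp add: M_def upper_half_plane_def)
    have dM: "(M has_field_derivative 1 / (of_int c * x + of_int d)^2) (at x)"
      unfolding M_def using moeb_deriv[OF det ix] by simp
    have dh1: "(h has_field_derivative f (M x)) (at (M x))"
      unfolding h_def by (rule h_deriv[OF hol Mx])
    have dh2: "(h has_field_derivative f x) (at x)"
      unfolding h_def by (rule h_deriv[OF hol x])
    have dg: "(g has_field_derivative f (M x) * (1 / (of_int c * x + of_int d)^2) - f x) (at x)"
      unfolding g_def by (rule DERIV_diff[OF DERIV_chain2[OF dh1 dM] dh2])
    have fM: "f (M x) = (of_int c * x + of_int d)^2 * f x"
      using tr x unfolding M_def by simp
    have z: "f (M x) * (1 / (of_int c * x + of_int d)^2) - f x = 0"
      unfolding fM using nz by simp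
    have "(g has_field_derivative 0) (at x)" using dg unfolding z .
    then show "(g has_field_derivative 0) (at x within upper_half_plane)"
      by (rule has_field_derivative_at_within)
  qed
  then obtain k where k: "\<And>x. x \<in> upper_half_plane \<Longrightarrow> g x = k" by blast
  have iH: "\<i> \<in> upper_half_plane" by (simp add: upper_half_plane_def)
  have "g \<tau> = g \<i>" using k[OF t] k[OF iH] by simp
  moreover have "h \<i> = 0" unfolding h_def by simp
  ultimately have "h (M \<tau>) = h \<tau> + h (M \<i>)" unfolding g_def by (simp add: algebra_simps)
  then show ?thesis unfolding h_def M_def .
qed

theorem proposition4p1:
  fixes \<Gamma> :: "int mat2 set" and f :: "complex \<Rightarrow> complex"
  assumes "subgroup \<Gamma> SL2Z"
    and "finite (rcosets\<^bsub>SL2Z\<^esub> \<Gamma>)"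
    and "modular_form_wt2 \<Gamma> f"
  shows "\<exists>\<rho>. \<rho> \<in> hom (SL2Z\<lparr>carrier := \<Gamma>\<rparr>) GL2C \<and> triangular_rep \<Gamma> \<rho> \<and>
           equivariant \<Gamma> \<rho> (\<lambda>\<tau>. contour_integral (linepath \<i> \<tau>) f)"
proof -
  define h where "h = (\<lambda>x. contour_integral (linepath \<i> x) f)"
  define \<rho> where "\<rho> = (\<lambda>\<gamma>. (1::complex, h (moebius (of_int_mat2 \<gamma>) \<i>), 0::complex, 1::complex))"
  have hol: "f holomorphic_on upper_half_plane"
    using assms(3) unfolding modular_form_wt2_def by blast
  have tr: "\<And>\<gamma> \<tau>. \<gamma> \<in> \<Gamma> \<Longrightarrow> \<tau> \<in> upper_half_plane \<Longrightarrow>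
        f (moebius (of_int_mat2 \<gamma>) \<tau>) = (automorphy_factor \<gamma> \<tau>)\<^sup>2 * f \<tau>"
    using assms(3) unfolding modular_form_wt2_def by blast
  have det: "\<And>\<gamma>. \<gamma> \<in> \<Gamma> \<Longrightarrow> mat2_det \<gamma> = 1"
    using subgroup.subset[OF assms(1)] by (auto simp: SL2Z_def)
  have E: "h (moebius (of_int_mat2 \<gamma>) \<tau>) = h \<tau> + h (moebius (of_int_mat2 \<gamma>) \<i>)"
    if g: "\<gamma> \<in> \<Gamma>" and t: "\<tau> \<in> upper_half_plane" for \<gamma> \<tau>
  proof -
    obtain a b c d where gd: "\<gamma> = (a,b,c,d)" by (cases \<gamma>) auto
    show ?thesis unfolding h_def gd
    proof (rule key[OF hol _ _ t])
      show "a * d - b * c = 1" using det[OF g] unfolding gd by simp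
      show "\<forall>\<tau>\<in>upper_half_plane. f (moebius (of_int_mat2 (a,b,c,d)) \<tau>) = (automorphy_factor (a,b,c,d) \<tau>)\<^sup>2 * f \<tau>"
        using tr[OF g] unfolding gd by blast
    qed
  qed
  have mulc: "mult (SL2Z\<lparr>carrier := \<Gamma>\<rparr>) = mat2_mult" by (simp add: SL2Z_def)
  have hom: "\<rho> \<in> hom (SL2Z\<lparr>carrier := \<Gamma>\<rparr>) GL2C"
  proof (rule homI)
    fix x assume "x \<in> carrier (SL2Z\<lparr>carrier := \<Gamma>\<rparr>)"
    show "\<rho> x \<in> carrier GL2C" by (simp add: \<rho>_def GL2C_def)
  next
    fix x y assume x: "x \<in> carrier (SL2Z\<lparr>carrier := \<Gamma>\<rparr>)" and y: "y \<in> carrier (SL2Z\<lparr>carrier := \<Gamma>\<rparr>)"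
    then have x: "x \<in> \<Gamma>" and y: "y \<in> \<Gamma>" by auto
    obtain a b c d where xd: "x = (a,b,c,d)" by (cases x) auto
    obtain a' b' c' d' where yd: "y = (a',b',c',d')" by (cases y) auto
    have iH: "\<i> \<in> upper_half_plane" by (simp add: upper_half_plane_def)
    have yi: "moebius (of_int_mat2 y) \<i> \<in> upper_half_plane"
      using moeb_Im[of a' d' b' c' \<i>] det[OF y] yd by (simp add: upper_half_plane_def)
    have comp: "moebius (of_int_mat2 (mat2_mult x y)) \<i> = moebius (of_int_mat2 x) (moebius (of_int_mat2 y) \<i>)"
      unfolding xd yd by (rule moeb_comp) (use det[OF x] det[OF y] xd yd in auto)
    have "h (moebius (of_int_mat2 (mat2_mult x y)) \<i>) = h (moebius (of_int_mat2 y) \<i>) + h (moebius (of_int_mat2 x) \<i>)"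
      unfolding comp by (rule E[OF x yi])
    then show "\<rho> (x \<otimes>\<^bsub>SL2Z\<lparr>carrier := \<Gamma>\<rparr>\<^esub> y) = \<rho> x \<otimes>\<^bsub>GL2C\<^esub> \<rho> y"
      by (simp add: mulc \<rho>_def GL2C_def)
  qed
  have tri: "triangular_rep \<Gamma> \<rho>" unfolding triangular_rep_def \<rho>_def by auto
  have eq: "equivariant \<Gamma> \<rho> h"
    unfolding equivariant_def
  proof (intro ballI)
    fix \<gamma> \<tau> assume g: "\<gamma> \<in> \<Gamma>" and t: "\<tau> \<in> upper_half_plane"
    have "moebius (\<rho> \<gamma>) (h \<tau>) = h \<tau> + h (moebius (of_int_mat2 \<gamma>) \<i>)"
      by (simp add: \<rho>_def)
    then show "h (moebius (of_int_mat2 \<gamma>) \<tau>) = moebius (\<rho> \<gamma>) (h \<tau>)"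
      using E[OF g t] by simp
  qed
  show ?thesis using hom tri eq unfolding h_def by blast
qed

end
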